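(* Let $(\gamma,d)$ be a metric space homeomorphic to $[0,1]$, equipped with a total order $\le$ induced by a homeomorphism from $[0,1]$. Let $(x_i,z_i,y_i)_{i\in\mathbb{N}}$ be triples of points of $\gamma$ with $x_i\le z_i\le y_i$ and $x_i\ne y_i$ for each $i$. If $$\lim_{i\to\infty}\frac{d(x_i,y_i)}{\max\{d(x_i,z_i),d(z_i,y_i)\}}=0,$$ then $\lim_{i\to\infty}\max\{d(x_i,z_i),d(z_i,y_i)\}=0$. *)

theory Defs
  imports "HOL-Analysis.Analysis"
begin

text \<open>Order on a curve induced by a homeomorphism h : [0,1] -> gamma with inverse g:
  a \<le> b iff g a \<le> g b.\<close>
definition curve_le :: "('a \<Rightarrow> real) \<Rightarrow> 'a \<Rightarrow> 'a \<Rightarrow> bool" where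
  "curve_le g a b \<longleftrightarrow> g a \<le> g b"

end

theory Submission
  imports Defs
begin

theorem lemma4p1:
  fixes \<gamma> :: "'a::metric_space set" and h :: "real \<Rightarrow> 'a" and g :: "'a \<Rightarrow> real"
    and x z y :: "nat \<Rightarrow> 'a"
  assumes hom: "homeomorphism {0..1} \<gamma> h g"
    and mem: "\<And>i. x i \<in> \<gamma> \<and> z i \<in> \<gamma> \<and> y i \<in> \<gamma>"
    and ord1: "\<And>i. curve_le g (x i) (z i)"
    and ord2: "\<And>i. curve_le g (z i) (y i)"
    and ne: "\<And>i. x i \<noteq> y i"
    and lim: "(\<lambda>i. dist (x i) (y i) / max (dist (x i) (z i)) (dist (z i) (y i))) \<longlonglongrightarrow> 0"
  shows "(\<lambda>i. max (dist (x i) (z i)) (dist (z i) (y i))) \<longlonglongrightarrow> 0"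
proof -
  have hc: "continuous_on {0..1} h" and himg: "h ` {0..1} = \<gamma>" and gimg: "g ` \<gamma> = {0..1}"
    and hg: "\<And>a. a \<in> \<gamma> \<Longrightarrow> h (g a) = a" and gh: "\<And>s. s \<in> {0..1} \<Longrightarrow> g (h s) = s"
    using hom unfolding homeomorphism_def by auto
  have "compact \<gamma>" using compact_continuous_image[OF hc] himg by auto
  then have "bounded \<gamma>" by (rule compact_imp_bounded)
  then obtain c e where ce: "\<And>a. a \<in> \<gamma> \<Longrightarrow> dist c a \<le> e" unfolding bounded_def by blast
  define D where "D = 2 * e + 1"
  have Dd: "dist a b < D" if "a \<in> \<gamma>" "b \<in> \<gamma>" for a b
  proof -
    have "dist a b \<le> dist c a + dist c b" by (metis dist_commute dist_triangle)
    also have "\<dots> \<le> 2 * e" using ce[OF that(1)] ce[OF that(2)] by linarith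
    finally show ?thesis unfolding D_def by simp
  qed
  have Dpos: "D > 0" using Dd mem[of 0] by (meson dist_not_less_zero less_le_trans not_le)
  define M where "M = (\<lambda>i. max (dist (x i) (z i)) (dist (z i) (y i)))"
  have key: "\<forall>\<^sub>F i in sequentially. M i < \<epsilon>" if eps: "\<epsilon> > 0" for \<epsilon>
  proof -
    define B :: "(real \<times> real \<times> real) set" where "B = {0..1} \<times> {0..1} \<times> {0..1}"
    define \<phi> where "\<phi> = (\<lambda>p::real \<times> real \<times> real. (fst (snd p) - fst p, snd (snd p) - fst (snd p),
        max (dist (h (fst p)) (h (fst (snd p)))) (dist (h (fst (snd p))) (h (snd (snd p))))))"
    define T :: "(real \<times> real \<times> real) set" where "T = {0..} \<times> {0..} \<times> {\<epsilon>..}"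
    define S where "S = B \<inter> \<phi> -` T"
    have Bc: "compact B" unfolding B_def by (intro compact_Times) auto
    have hco: "continuous_on B (\<lambda>p. h (fst p))" "continuous_on B (\<lambda>p. h (fst (snd p)))"
        "continuous_on B (\<lambda>p. h (snd (snd p)))"
      by (auto simp: B_def intro!: continuous_on_compose2[OF hc] continuous_intros)
    have \<phi>c: "continuous_on B \<phi>" unfolding \<phi>_def
      by (intro continuous_intros hco)
    have "closed S" unfolding S_def
      by (rule continuous_closed_preimage[OF \<phi>c compact_imp_closed[OF Bc]])
         (auto simp: T_def intro!: closed_Times)
    then have Sc: "compact S" using compact_Int_closed[OF Bc, of S] unfolding S_def by auto
    have Fc: "continuous_on S (\<lambda>p. dist (h (fst p)) (h (snd (snd p))))"
      by (rule continuous_on_subset[of B]) (auto simp: S_def intro!: continuous_intros hco)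
    show ?thesis
    proof (cases "S = {}")
      case False
      obtain q where q: "q \<in> S" and qmin: "\<And>p. p \<in> S \<Longrightarrow>
          dist (h (fst q)) (h (snd (snd q))) \<le> dist (h (fst p)) (h (snd (snd p)))"
        using continuous_attains_inf[OF Sc False Fc] by blast
      define \<delta> where "\<delta> = dist (h (fst q)) (h (snd (snd q)))"
      have "\<delta> > 0"
      proof (rule ccontr)
        assume "\<not> \<delta> > 0"
        then have "h (fst q) = h (snd (snd q))" unfolding \<delta>_def by simp
        then have "fst q = snd (snd q)" using gh q by (metis S_def B_def IntD1 mem_Times_iff)
        moreover have "fst q \<le> fst (snd q)" "fst (snd q) \<le> snd (snd q)" 
          "\<epsilon> \<le> max (dist (h (fst q)) (h (fst (snd q)))) (dist (h (fst (snd q))) (h (snd (snd q))))"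
          using q by (auto simp: S_def T_def \<phi>_def)
        ultimately show False using eps by auto
      qed
      have ab: "\<And>i. \<bar>max (dist (x i) (z i)) (dist (z i) (y i))\<bar> = max (dist (x i) (z i)) (dist (z i) (y i))"
        by (simp add: abs_of_nonneg le_max_iff_disj)
      have "\<delta> / D > 0" using Dpos \<open>\<delta> > 0\<close> by simp
      then have "\<forall>\<^sub>F i in sequentially. dist (x i) (y i) / M i < \<delta> / D"
        using lim[unfolded tendsto_iff] unfolding M_def
        by (auto elim!: allE[of _ "\<delta>/D"] eventually_mono simp: dist_real_def ab)
      then show ?thesis
      proof (rule eventually_mono)
        fix i assume r: "dist (x i) (y i) / M i < \<delta> / D"
        show "M i < \<epsilon>"
        proof (rule ccontr)
          assume "\<not> M i < \<epsilon>"
          then have Me: "M i \<ge> \<epsilon>" by simp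
          let ?p = "(g (x i), g (z i), g (y i))"
          have gin: "g (x i) \<in> {0..1}" "g (z i) \<in> {0..1}" "g (y i) \<in> {0..1}"
            using mem gimg by blast+
          have "?p \<in> S" using Me gin ord1[of i] ord2[of i] mem[of i]
            by (auto simp: S_def B_def T_def \<phi>_def curve_le_def hg M_def)
          then have "\<delta> \<le> dist (x i) (y i)" using qmin[of ?p] mem[of i]
            by (auto simp: \<delta>_def hg)
          moreover have "M i < D" "M i > 0" using Dd mem[of i] Me eps unfolding M_def by auto
          ultimately have "\<delta> / D \<le> dist (x i) (y i) / M i"
            using \<open>\<delta> > 0\<close> by (intro frac_le) auto
          then show False using r by simp
        qed
      qed
    next
      case True
      show ?thesis
      proof (rule always_eventually, rule allI, rule ccontr)
        fix i assume "\<not> M i < \<epsilon>"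
        then have Me: "M i \<ge> \<epsilon>" by simp
        let ?p = "(g (x i), g (z i), g (y i))"
        have gin: "g (x i) \<in> {0..1}" "g (z i) \<in> {0..1}" "g (y i) \<in> {0..1}"
          using mem gimg by blast+
        have "?p \<in> S" using Me gin ord1[of i] ord2[of i] mem[of i]
          by (auto simp: S_def B_def T_def \<phi>_def curve_le_def hg M_def)
        then show False using True by simp
      qed
    qed
  qed
  show ?thesis unfolding tendsto_iff
  proof (intro allI impI)
    fix r :: real assume "r > 0"
    then show "\<forall>\<^sub>F i in sequentially. dist (max (dist (x i) (z i)) (dist (z i) (y i))) 0 < r"
      using key[of r] unfolding M_def by (auto elim!: eventually_mono simp: dist_real_def abs_if)
  qed
qed

end
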